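(* Let $(\mathcal P,\cdot,[-,\dots,-])$ be a nonzero solvable finite-dimensional Poisson $n$-Lie algebra over an algebraically closed field of characteristic zero. Then there exists a nonzero vector $v\in\mathcal P$ that is a common eigenvector of all operators $P_x$ ($x\in\mathcal P$) and $Q_y$ ($y\in\wedge^{n-1}\mathcal P$).
   Context: A Poisson $n$-Lie algebra is a commutative associative algebra $(\mathcal P,\cdot)$ with an $n$-linear skew-symmetric bracket satisfying the fundamental identity $[x_1,\dots,x_{n-1},[y_1,\dots,y_n]]=\sum_{i=1}^n[y_1,\dots,[x_1,\dots,x_{n-1},y_i],\dots,y_n]$ and the Leibniz rule $[y\cdot z,x_2,\dots,x_n]=y\cdot[z,x_2,\dots,x_n]+z\cdot[y,x_2,\dots,x_n]$. $P_x(z)=x\cdot z$; for $y=y_1\wedge\cdots\wedge y_{n-1}$, $Q_y(z)=[y_1,\dots,y_{n-1},z]$, extended linearly. $\mathcal P$ is solvable if $\mathcal P^{(s)}=0$ for some $s$, where $\mathcal P^{(1)}=\mathcal P$, $\mathcal P^{(k+1)}=[\mathcal P^{(k)},\mathcal P^{(k)},\mathcal P,\dots,\mathcal P]+\mathcal P^{(k)}\cdot\mathcal P^{(k)}$ (linear spans). *)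

theory Defs
  imports "HOL-Computational_Algebra.Polynomial"
begin

definition finite_dim_space :: "('k::field \<Rightarrow> 'v::ab_group_add \<Rightarrow> 'v) \<Rightarrow> bool" where
  "finite_dim_space scale \<longleftrightarrow> vector_space scale \<and>
     (\<exists>B. finite B \<and> module.span scale B = UNIV)"

definition comm_assoc_algebra ::
  "('k::field \<Rightarrow> 'v::ab_group_add \<Rightarrow> 'v) \<Rightarrow> ('v \<Rightarrow> 'v \<Rightarrow> 'v) \<Rightarrow> bool" where
  "comm_assoc_algebra scale mul \<longleftrightarrow>
     (\<forall>x y z. mul (x + y) z = mul x z + mul y z) \<and>
     (\<forall>c x y. mul (scale c x) y = scale c (mul x y)) \<and>
     (\<forall>x y. mul x y = mul y x) \<and>
     (\<forall>x y z. mul (mul x y) z = mul x (mul y z))"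

definition n_multilinear ::
  "('k::field \<Rightarrow> 'v::ab_group_add \<Rightarrow> 'v) \<Rightarrow> nat \<Rightarrow> ('v list \<Rightarrow> 'v) \<Rightarrow> bool" where
  "n_multilinear scale n br \<longleftrightarrow>
     (\<forall>xs i a b. length xs = n \<longrightarrow> i < n \<longrightarrow>
        br (xs[i := a + b]) = br (xs[i := a]) + br (xs[i := b])) \<and>
     (\<forall>xs i c a. length xs = n \<longrightarrow> i < n \<longrightarrow>
        br (xs[i := scale c a]) = scale c (br (xs[i := a])))"

definition skew_symmetric :: "nat \<Rightarrow> ('v::ab_group_add list \<Rightarrow> 'v) \<Rightarrow> bool" where
  "skew_symmetric n br \<longleftrightarrow>
     (\<forall>xs i j. length xs = n \<longrightarrow> i < n \<longrightarrow> j < n \<longrightarrow> i \<noteq> j \<longrightarrow>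
        br (xs[i := xs ! j, j := xs ! i]) = - br xs)"

definition fundamental_identity :: "nat \<Rightarrow> ('v::ab_group_add list \<Rightarrow> 'v) \<Rightarrow> bool" where
  "fundamental_identity n br \<longleftrightarrow>
     (\<forall>xs ys. length xs = n - 1 \<longrightarrow> length ys = n \<longrightarrow>
        br (xs @ [br ys]) = (\<Sum>i<n. br (ys[i := br (xs @ [ys ! i])])))"

definition leibniz_rule ::
  "nat \<Rightarrow> ('v::ab_group_add \<Rightarrow> 'v \<Rightarrow> 'v) \<Rightarrow> ('v list \<Rightarrow> 'v) \<Rightarrow> bool" where
  "leibniz_rule n mul br \<longleftrightarrow>
     (\<forall>y z xs. length xs = n - 1 \<longrightarrow>
        br (mul y z # xs) = mul y (br (z # xs)) + mul z (br (y # xs)))"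

definition poisson_n_lie_algebra ::
  "('k::field \<Rightarrow> 'v::ab_group_add \<Rightarrow> 'v) \<Rightarrow> nat \<Rightarrow> ('v \<Rightarrow> 'v \<Rightarrow> 'v) \<Rightarrow> ('v list \<Rightarrow> 'v) \<Rightarrow> bool" where
  "poisson_n_lie_algebra scale n mul br \<longleftrightarrow>
     vector_space scale \<and> comm_assoc_algebra scale mul \<and>
     n_multilinear scale n br \<and> skew_symmetric n br \<and>
     fundamental_identity n br \<and> leibniz_rule n mul br"

text \<open>Derived series, shifted by one: derived_series ... 0 = P^(1) = P and
  derived_series ... k = P^(k+1).\<close>
primrec derived_series ::
  "('k::field \<Rightarrow> 'v::ab_group_add \<Rightarrow> 'v) \<Rightarrow> nat \<Rightarrow> ('v \<Rightarrow> 'v \<Rightarrow> 'v) \<Rightarrow> ('v list \<Rightarrow> 'v) \<Rightarrow> nat \<Rightarrow> 'v set" where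
  "derived_series scale n mul br 0 = UNIV"
| "derived_series scale n mul br (Suc k) =
     module.span scale
       ({br (a # b # cs) | a b cs. a \<in> derived_series scale n mul br k \<and>
                                  b \<in> derived_series scale n mul br k \<and> length cs = n - 2}
        \<union> {mul a b | a b. a \<in> derived_series scale n mul br k \<and>
                          b \<in> derived_series scale n mul br k})"

definition solvable_poisson ::
  "('k::field \<Rightarrow> 'v::ab_group_add \<Rightarrow> 'v) \<Rightarrow> nat \<Rightarrow> ('v \<Rightarrow> 'v \<Rightarrow> 'v) \<Rightarrow> ('v list \<Rightarrow> 'v) \<Rightarrow> bool" where
  "solvable_poisson scale n mul br \<longleftrightarrow> (\<exists>s. derived_series scale n mul br s = {0})"

end

theory Submission
  imports Defs
begin


locale lie_ctx = finite_dimensional_vector_space scale Basis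
  for scale :: "'k::{alg_closed_field, field_char_0} \<Rightarrow> 'v::ab_group_add \<Rightarrow> 'v"
  and Basis :: "'v set"
begin

definition lin :: "('v \<Rightarrow> 'v) \<Rightarrow> bool" where
  "lin T \<longleftrightarrow> (\<forall>x y. T (x + y) = T x + T y) \<and> (\<forall>c x. T (scale c x) = scale c (T x))"

lemma lin_add: "lin T \<Longrightarrow> T (x + y) = T x + T y" by (simp add: lin_def)
lemma lin_scale: "lin T \<Longrightarrow> T (scale c x) = scale c (T x)" by (simp add: lin_def)
lemma lin_zero: "lin T \<Longrightarrow> T 0 = 0"
  using lin_scale[of T 0 0] by simp
lemma lin_neg: "lin T \<Longrightarrow> T (- x) = - T x"
  by (metis add_eq_0_iff2 lin_add lin_zero add.right_inverse)
lemma lin_diff: "lin T \<Longrightarrow> T (x - y) = T x - T y"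
  by (metis diff_conv_add_uminus lin_add lin_neg)
lemma lin_sum: "lin T \<Longrightarrow> T (sum f I) = (\<Sum>i\<in>I. T (f i))"
  by (induction I rule: infinite_finite_induct) (auto simp: lin_zero lin_add)

lemma lin_span: assumes "lin T" "u \<in> span S" shows "T u \<in> span (T ` S)"
  using assms(2)
proof (induction rule: span_induct_alt)
  case base then show ?case using assms(1) by (simp add: lin_zero span_zero)
next
  case (step c x y)
  then show ?case using assms(1)
    by (simp add: lin_add lin_scale span_add span_scale span_base)
qed

lemma lin_span_sub: assumes "lin T" "T ` S \<subseteq> span S'" "u \<in> span S" shows "T u \<in> span S'"
  using lin_span[OF assms(1,3)] assms(2) by (metis span_mono span_span subsetD)

lemma lin_funpow: "lin T \<Longrightarrow> lin (T ^^ i)"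
  by (induction i) (auto simp: lin_def)

lemma krylov_indep:
  assumes "\<forall>i<m. (T^^i) w \<notin> span ((\<lambda>i. (T^^i) w) ` {..<i})"
  shows "independent ((\<lambda>i. (T^^i) w) ` {..<m}) \<and> inj_on (\<lambda>i. (T^^i) w) {..<m}"
  using assms
proof (induction m)
  case 0 have "independent {}" by (rule independent_empty) then show ?case by simp
next
  case (Suc m)
  let ?K = "\<lambda>i. (T^^i) w"
  have IH: "independent (?K ` {..<m}) \<and> inj_on ?K {..<m}" using Suc by auto
  have nm: "?K m \<notin> span (?K ` {..<m})" using Suc.prems by auto
  then have "?K m \<notin> ?K ` {..<m}" using span_superset[of "?K ` {..<m}"] by (meson subsetD)
  then show ?case using IH nm
    by (simp add: lessThan_Suc independent_insertI)
qed

lemma krylov: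
  assumes "lin T" "w \<noteq> 0"
  obtains d where "d > 0" "independent ((\<lambda>i. (T^^i) w) ` {..<d})"
    "inj_on (\<lambda>i. (T^^i) w) {..<d}"
    "(T^^d) w \<in> span ((\<lambda>i. (T^^i) w) ` {..<d})"
proof -
  let ?K = "\<lambda>i. (T^^i) w"
  let ?P = "\<lambda>d. ?K d \<in> span (?K ` {..<d})"
  have ex: "\<exists>d. ?P d"
  proof (rule ccontr)
    assume "\<not> ?thesis"
    then have "independent (?K ` {..<Suc (card Basis)}) \<and> inj_on ?K {..<Suc (card Basis)}"
      by (intro krylov_indep) auto
    then have "card (?K ` {..<Suc (card Basis)}) \<le> card Basis"
      using independent_span_bound[OF finite_Basis, of "?K ` {..<Suc (card Basis)}"] span_Basis
      by auto
    moreover have "card (?K ` {..<Suc (card Basis)}) = Suc (card Basis)"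
      using \<open>independent _ \<and> inj_on _ _\<close> by (simp add: card_image)
    ultimately show False by simp
  qed
  define d where "d = (LEAST d. ?P d)"
  have Pd: "?P d" unfolding d_def by (rule LeastI_ex[OF ex])
  have nP: "\<forall>i<d. \<not> ?P i" unfolding d_def using not_less_Least by blast
  have "d \<noteq> 0"
  proof
    assume d0: "d = 0"
    have "?K d \<in> span (?K ` {..<d})" by (rule Pd)
    then have "w \<in> span {}" unfolding d0 by simp
    then show False using assms(2) by simp
  qed
  moreover have "independent (?K ` {..<d}) \<and> inj_on ?K {..<d}"
    using nP by (intro krylov_indep) auto
  ultimately show ?thesis using Pd by (intro that) auto
qed

definition opp :: "('v \<Rightarrow> 'v) \<Rightarrow> 'k poly \<Rightarrow> 'v \<Rightarrow> 'v" where
  "opp T p u = (\<Sum>i\<le>degree p. scale (coeff p i) ((T^^i) u))"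

lemma opp_bound:
  assumes "degree p \<le> N"
  shows "opp T p u = (\<Sum>i\<le>N. scale (coeff p i) ((T^^i) u))"
  unfolding opp_def
  by (rule sum.mono_neutral_left) (use assms in \<open>auto simp: coeff_eq_0\<close>)

lemma opp_factor:
  assumes "lin T"
  shows "opp T ([:-r, 1:] * q) u = T (opp T q u) - scale r (opp T q u)"
proof -
  let ?N = "degree q"
  have eq: "[:-r, 1:] * q = smult (-r) q + pCons 0 q"
    by (simp add: mult_pCons_left)
  have deg: "degree ([:-r, 1:] * q) \<le> Suc ?N"
    unfolding eq by (intro degree_add_le) (auto simp: degree_pCons_le)
  have "opp T ([:-r, 1:] * q) u
      = (\<Sum>i\<le>Suc ?N. scale (- r * coeff q i) ((T^^i) u))
        + (\<Sum>i\<le>Suc ?N. scale (coeff (pCons 0 q) i) ((T^^i) u))"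
    unfolding opp_bound[OF deg] unfolding eq coeff_add coeff_smult scale_left_distrib
    by (rule sum.distrib)
  also have "(\<Sum>i\<le>Suc ?N. scale (- r * coeff q i) ((T^^i) u)) = - scale r (opp T q u)"
    by (simp add: opp_bound[of q "Suc ?N"] scale_sum_right sum_negf[symmetric] del: sum.atMost_Suc)
  also have "(\<Sum>i\<le>Suc ?N. scale (coeff (pCons 0 q) i) ((T^^i) u))
      = (\<Sum>i\<le>?N. scale (coeff q i) (T ((T^^i) u)))"
    by (subst sum.atMost_Suc_shift) (simp add: funpow_swap1)
  also have "\<dots> = T (opp T q u)"
    by (simp add: opp_def lin_sum[OF assms] lin_scale[OF assms])
  finally show ?thesis by (simp add: algebra_simps)
qed

lemma funpow_in: "T ` W \<subseteq> W \<Longrightarrow> u \<in> W \<Longrightarrow> (T^^i) u \<in> W"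
  by (induction i) auto

lemma opp_in: "subspace W \<Longrightarrow> T ` W \<subseteq> W \<Longrightarrow> u \<in> W \<Longrightarrow> opp T p u \<in> W"
  unfolding opp_def by (intro subspace_sum subspace_scale funpow_in) auto

lemma eigen_poly:
  assumes "lin T" "subspace W" "T ` W \<subseteq> W" "u \<in> W" "u \<noteq> 0"
  shows "p \<noteq> 0 \<Longrightarrow> opp T p u = 0 \<Longrightarrow> \<exists>z\<in>W. z \<noteq> 0 \<and> (\<exists>c. T z = scale c z)"
proof (induction "degree p" arbitrary: p rule: less_induct)
  case less
  show ?case
  proof (cases "degree p = 0")
    case True
    then have "opp T p u = scale (coeff p 0) u" by (simp add: opp_def)
    moreover have "coeff p 0 \<noteq> 0"
      using True less.prems(1) leading_coeff_0_iff by fastforce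
    ultimately show ?thesis using less.prems(2) assms(5) by simp
  next
    case False
    then obtain r where r: "poly p r = 0" using alg_closed_imp_poly_has_root by blast
    define q where "q = synthetic_div p r"
    have pq: "p = [:-r, 1:] * q"
      using synthetic_div_correct'[of r p] r by (simp add: q_def)
    have q0: "q \<noteq> 0" using pq less.prems(1) by auto
    have dq: "degree q < degree p" using False by (simp add: q_def degree_synthetic_div)
    define z where "z = opp T q u"
    have "T z - scale r z = 0"
      using less.prems(2) opp_factor[OF assms(1), of r q u] pq by (simp add: z_def)
    then have Tz: "T z = scale r z" by simp
    show ?thesis
    proof (cases "z = 0")
      case True
      then show ?thesis using less.hyps[OF dq q0] by (simp add: z_def)
    next
      case False
      moreover have "z \<in> W" unfolding z_def by (rule opp_in[OF assms(2,3,4)])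
      ultimately show ?thesis using Tz by blast
    qed
  qed
qed

lemma span_image_sum:
  assumes "finite I" "inj_on f I" "v \<in> span (f ` I)"
  obtains a where "v = (\<Sum>i\<in>I. scale (a i) (f i))"
proof -
  obtain u where "v = (\<Sum>x\<in>f ` I. scale (u x) x)"
    using assms(3) span_finite[of "f ` I"] assms(1) by auto
  also have "\<dots> = (\<Sum>i\<in>I. scale (u (f i)) (f i))"
    by (rule sum.reindex[OF assms(2), unfolded comp_def])
  finally show ?thesis by (rule that)
qed

lemma eigen_exists:
  assumes "lin T" "subspace W" "T ` W \<subseteq> W" "w \<in> W" "w \<noteq> 0"
  shows "\<exists>z\<in>W. z \<noteq> 0 \<and> (\<exists>c. T z = scale c z)"
proof -
  let ?K = "\<lambda>i. (T^^i) w"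
  obtain d where d: "d > 0" "independent (?K ` {..<d})" "inj_on ?K {..<d}"
    "?K d \<in> span (?K ` {..<d})"
    using krylov[OF assms(1,5)] by blast
  obtain a where a: "?K d = (\<Sum>i<d. scale (a i) (?K i))"
    using span_image_sum[OF _ d(3) d(4)] by auto
  define p where "p = monom 1 d - (\<Sum>i<d. monom (a i) i)"
  have cp: "coeff p j = (if j = d then 1 else 0) - (if j < d then a j else 0)" for j
    by (simp add: p_def coeff_sum)
  have "degree p \<le> d"
    unfolding p_def
    by (intro degree_diff_le degree_sum_le) (auto simp: degree_monom_le intro: order.trans[OF degree_monom_le])
  then have "opp T p w = (\<Sum>j\<le>d. scale ((if j = d then 1 else 0) - (if j < d then a j else 0)) (?K j))"
    by (simp add: opp_bound cp)
  also have "\<dots> = (\<Sum>j\<le>d. scale (if j = d then 1 else 0) (?K j)) - (\<Sum>j\<le>d. scale (if j < d then a j else 0) (?K j))"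
    by (simp add: scale_left_diff_distrib sum_subtractf)
  also have "(\<Sum>j\<le>d. scale (if j = d then 1 else 0) (?K j)) = ?K d"
    by (simp add: if_distrib[of "\<lambda>c. scale c _"] sum.delta cong: if_cong)
  also have "(\<Sum>j\<le>d. scale (if j < d then a j else 0) (?K j)) = (\<Sum>j<d. scale (a j) (?K j))"
    by (simp add: lessThan_Suc_atMost[symmetric])
  finally have "opp T p w = 0" using a by simp
  moreover have "p \<noteq> 0" using cp[of d] by auto
  ultimately show ?thesis using eigen_poly[OF assms] by blast
qed

lemma trace_zero:
  fixes b :: "nat \<Rightarrow> 'v"
  assumes bi: "independent (b ` {..<d})" "inj_on b {..<d}" "d > 0"
    and S: "lin S" "S ` span (b ` {..<d}) \<subseteq> span (b ` {..<d})"
    and T: "lin T" "T ` span (b ` {..<d}) \<subseteq> span (b ` {..<d})"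
    and tri: "\<forall>i<d. S (T (b i)) - T (S (b i)) - scale c (b i) \<in> span (b ` {..<i})"
  shows "c = 0"
proof -
  let ?B = "b ` {..<d}"
  let ?U = "span ?B"
  define co where "co i v = representation ?B v (b i)" for i v
  have bU: "b j \<in> ?U" if "j < d" for j using that by (intro span_base) auto
  have f1: "v = (\<Sum>j<d. scale (co j v) (b j))" if "v \<in> ?U" for v
  proof -
    have "v = (\<Sum>x\<in>?B. scale (representation ?B v x) x)"
      by (rule sym, rule sum_representation_eq[OF bi(1) that]) auto
    also have "\<dots> = (\<Sum>j<d. scale (co j v) (b j))"
      unfolding co_def by (rule sum.reindex[OF bi(2), unfolded comp_def])
    finally show ?thesis .
  qed
  have f2: "co i (A v) = (\<Sum>j<d. co j v * co i (A (b j)))"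
    if A: "lin A" "A ` ?U \<subseteq> ?U" and v: "v \<in> ?U" for A v i
  proof -
    have AbU: "A (b j) \<in> ?U" if "j < d" for j using A(2) bU[OF that] by blast
    have "A v = (\<Sum>j<d. scale (co j v) (A (b j)))"
      by (subst f1[OF v]) (simp add: lin_sum[OF A(1)] lin_scale[OF A(1)])
    then have "co i (A v) = representation ?B (\<Sum>j<d. scale (co j v) (A (b j))) (b i)"
      by (simp add: co_def)
    also have "\<dots> = (\<Sum>j<d. representation ?B (scale (co j v) (A (b j))) (b i))"
      by (subst representation_sum[OF bi(1)]) (auto intro: span_scale AbU)
    also have "\<dots> = (\<Sum>j<d. co j v * co i (A (b j)))"
      by (intro sum.cong refl) (simp add: representation_scale[OF bi(1) AbU] co_def)
    finally show ?thesis .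
  qed
  have TbU: "T (b i) \<in> ?U" if "i < d" for i using T(2) bU[OF that] by blast
  have SbU: "S (b i) \<in> ?U" if "i < d" for i using S(2) bU[OF that] by blast
  have tr1: "(\<Sum>i<d. co i (S (T (b i)))) = (\<Sum>i<d. \<Sum>j<d. co j (T (b i)) * co i (S (b j)))"
    by (intro sum.cong refl f2[OF S] TbU) auto
  have tr2: "(\<Sum>i<d. co i (T (S (b i)))) = (\<Sum>i<d. \<Sum>j<d. co j (S (b i)) * co i (T (b j)))"
    by (intro sum.cong refl f2[OF T] SbU) auto
  have "(\<Sum>i<d. \<Sum>j<d. co j (S (b i)) * co i (T (b j))) = (\<Sum>i<d. \<Sum>j<d. co j (T (b i)) * co i (S (b j)))"
    by (subst sum.swap) (simp add: mult.commute)
  with tr1 tr2 have eq: "(\<Sum>i<d. co i (S (T (b i)))) = (\<Sum>i<d. co i (T (S (b i))))" by simp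
  have diag: "co i (S (T (b i)) - T (S (b i))) = c" if i: "i < d" for i
  proof -
    define x where "x = S (T (b i)) - T (S (b i)) - scale c (b i)"
    have xs: "x \<in> span (b ` {..<i})" using tri i by (simp add: x_def)
    have sub: "b ` {..<i} \<subseteq> ?B" using i by auto
    have xU: "x \<in> ?U" using xs span_mono[OF sub] by blast
    have "co i x = representation (b ` {..<i}) x (b i)"
      unfolding co_def by (rule fun_cong[OF representation_extend[OF bi(1) xs sub]])
    also have "\<dots> = 0"
    proof (rule ccontr)
      assume "representation (b ` {..<i}) x (b i) \<noteq> 0"
      then have "b i \<in> b ` {..<i}" by (rule representation_ne_zero)
      then obtain j where "j < i" "b j = b i" by auto
      with bi(2) i show False by (metis inj_on_eq_iff lessThan_iff order.strict_trans less_irrefl)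
    qed
    finally have c0: "co i x = 0" .
    have e: "S (T (b i)) - T (S (b i)) = x + scale c (b i)" by (simp add: x_def)
    have "co i (S (T (b i)) - T (S (b i))) = co i x + co i (scale c (b i))"
      unfolding co_def e by (subst representation_add[OF bi(1)]) (auto intro: xU span_scale bU i)
    also have "co i (scale c (b i)) = c"
      unfolding co_def using i
      by (subst representation_scale[OF bi(1) bU[OF i]]) (simp add: representation_basis[OF bi(1)])
    finally show ?thesis using c0 by simp
  qed
  have "(\<Sum>i<d. co i (S (T (b i)) - T (S (b i)))) = (\<Sum>i<d. co i (S (T (b i)))) - (\<Sum>i<d. co i (T (S (b i))))"
    unfolding sum_subtractf[symmetric]
    using S(2) T(2) SbU TbU
    by (intro sum.cong refl) (simp add: co_def representation_diff[OF bi(1)] image_subset_iff)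
  also have "\<dots> = 0" using eq by simp
  finally have "(\<Sum>i<d. c) = 0" using diag by simp
  then have "of_nat d * c = 0" by simp
  then show "c = 0" using bi(3) by simp
qed

end

context lie_ctx begin
lemma subspace_nonzero: "subspace W \<Longrightarrow> W \<noteq> {0} \<Longrightarrow> \<exists>w\<in>W. w \<noteq> 0"
  using subspace_0 by blast

lemma common_eigen_comm:
  "\<forall>T\<in>F. lin T \<and> T ` W \<subseteq> W \<Longrightarrow> \<forall>S\<in>F. \<forall>T\<in>F. \<forall>w\<in>W. S (T w) = T (S w) \<Longrightarrow>
   subspace W \<Longrightarrow> W \<noteq> {0} \<Longrightarrow> \<exists>v\<in>W. v \<noteq> 0 \<and> (\<forall>T\<in>F. \<exists>c. T v = scale c v)"
proof (induction "dim W" arbitrary: W rule: less_induct)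
  case less
  show ?case
  proof (cases "\<forall>T\<in>F. \<exists>c. \<forall>w\<in>W. T w = scale c w")
    case True
    obtain v where "v \<in> W" "v \<noteq> 0" using subspace_nonzero[OF less.prems(3,4)] by blast
    then show ?thesis using True by blast
  next
    case False
    then obtain T where T: "T \<in> F" "\<not> (\<exists>c. \<forall>w\<in>W. T w = scale c w)" by blast
    have linT: "lin T" and TW: "T ` W \<subseteq> W" using T(1) less.prems(1) by auto
    obtain w where w: "w \<in> W" "w \<noteq> 0" using subspace_nonzero[OF less.prems(3,4)] by blast
    obtain z c where z: "z \<in> W" "z \<noteq> 0" "T z = scale c z"
      using eigen_exists[OF linT less.prems(3) TW w] by blast
    define E where "E = {w \<in> W. T w = scale c w}"
    have sE: "subspace E"
      unfolding subspace_def E_def using less.prems(3) linT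
      by (auto simp: subspace_0 subspace_add subspace_scale lin_zero lin_add lin_scale
          scale_right_distrib scale_left_commute)
    have EW: "E \<subseteq> W" by (auto simp: E_def)
    have "E \<noteq> W" using T(2) by (auto simp: E_def)
    with EW have "E \<subset> W" by blast
    moreover have spE: "span E = E" using sE by (metis span_eq_iff)
    moreover have spW: "span W = W" using less.prems(3) by (metis span_eq_iff)
    ultimately have "span E \<subset> span W" by (simp only: spE spW)
    then have "dim E < dim W" by (rule dim_psubset)
    moreover have "\<forall>S\<in>F. lin S \<and> S ` E \<subseteq> E"
    proof (intro ballI conjI)
      fix S assume S: "S \<in> F"
      then show "lin S" using less.prems(1) by auto
      show "S ` E \<subseteq> E"
      proof
        fix u assume "u \<in> S ` E"
        then obtain e where e: "e \<in> E" "u = S e" by blast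
        have "S e \<in> W" using e EW S less.prems(1) by blast
        moreover have "T (S e) = S (T e)" using less.prems(2) S T(1) e EW by blast
        moreover have "S (T e) = scale c (S e)" using e \<open>lin S\<close> by (simp add: E_def lin_scale)
        ultimately show "u \<in> E" using e by (simp add: E_def)
      qed
    qed
    moreover have "\<forall>S\<in>F. \<forall>T\<in>F. \<forall>w\<in>E. S (T w) = T (S w)" using less.prems(2) EW by blast
    moreover have "E \<noteq> {0}" using z by (auto simp: E_def)
    ultimately obtain v where "v \<in> E" "v \<noteq> 0" "\<forall>T\<in>F. \<exists>c. T v = scale c v"
      using less.hyps[of E] sE by blast
    then show ?thesis using EW by blast
  qed
qed

lemma weight_invariant:
  assumes linL: "\<forall>x\<in>L. lin x" and linF: "\<forall>a\<in>F. lin a"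
    and ideal: "\<forall>a\<in>F. \<forall>x\<in>L. (\<lambda>v. a (x v) - x (a v)) \<in> F"
    and W: "subspace W" "\<forall>x\<in>L. x ` W \<subseteq> W"
    and x: "x \<in> L" and w: "w \<in> W" "\<forall>a\<in>F. a w = scale (\<mu> a) w"
  shows "x w \<in> W \<and> (\<forall>a\<in>F. a (x w) = scale (\<mu> a) (x w))"
proof -
  have linx: "lin x" using linL x by auto
  have xw: "x w \<in> W" using W(2) x w(1) by blast
  show ?thesis
  proof (cases "w = 0")
    case True
    then show ?thesis using xw linF by (auto simp: lin_zero[OF linx] lin_zero)
  next
    case False
    let ?K = "\<lambda>i. (x^^i) w"
    obtain d where d: "d > 0" "independent (?K ` {..<d})" "inj_on ?K {..<d}"
      "?K d \<in> span (?K ` {..<d})"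
      using krylov[OF linx False] by blast
    have Ksuc: "?K (Suc i) = x (?K i)" for i by simp
    have tri: "\<forall>a\<in>F. a (?K i) - scale (\<mu> a) (?K i) \<in> span (?K ` {..<i})" for i
    proof (induction i)
      case 0
      then show ?case using w(2) by (simp add: span_zero)
    next
      case (Suc i)
      show ?case
      proof
        fix a assume a: "a \<in> F"
        define a' where "a' = (\<lambda>v. a (x v) - x (a v))"
        have a'F: "a' \<in> F" using ideal a x by (simp add: a'_def)
        define u where "u = a (?K i) - scale (\<mu> a) (?K i)"
        have u: "u \<in> span (?K ` {..<i})" using Suc a by (simp add: u_def)
        have sub: "span (?K ` {..<i}) \<subseteq> span (?K ` {..<Suc i})"
          by (intro span_mono) auto
        have Ki: "?K i \<in> span (?K ` {..<Suc i})" by (intro span_base) auto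
        have a'K: "a' (?K i) \<in> span (?K ` {..<Suc i})"
        proof -
          have "a' (?K i) - scale (\<mu> a') (?K i) \<in> span (?K ` {..<Suc i})"
            using Suc a'F sub by blast
          then have "a' (?K i) - scale (\<mu> a') (?K i) + scale (\<mu> a') (?K i) \<in> span (?K ` {..<Suc i})"
            by (intro span_add span_scale Ki)
          then show ?thesis by simp
        qed
        have xK: "x (?K j) \<in> span (?K ` {..<Suc i})" if "j < i" for j
        proof -
          have "x (?K j) = ?K (Suc j)" by simp
          moreover have "?K (Suc j) \<in> ?K ` {..<Suc i}"
            by (rule imageI) (simp add: that)
          ultimately show ?thesis by (simp add: span_base)
        qed
        have xu: "x u \<in> span (?K ` {..<Suc i})"
          by (rule lin_span_sub[OF linx _ u]) (use xK in auto)
        have "a (?K (Suc i)) = a' (?K i) + x (a (?K i))"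
          by (simp add: a'_def)
        also have "a (?K i) = scale (\<mu> a) (?K i) + u" by (simp add: u_def)
        finally have "a (?K (Suc i)) - scale (\<mu> a) (?K (Suc i)) = a' (?K i) + x u"
          by (simp add: lin_add[OF linx] lin_scale[OF linx])
        then show "a (?K (Suc i)) - scale (\<mu> a) (?K (Suc i)) \<in> span (?K ` {..<Suc i})"
          using a'K xu by (simp add: span_add)
      qed
    qed
    have xU: "x ` span (?K ` {..<d}) \<subseteq> span (?K ` {..<d})"
    proof
      fix y assume "y \<in> x ` span (?K ` {..<d})"
      then obtain u where u: "u \<in> span (?K ` {..<d})" "y = x u" by blast
      have "x (?K j) \<in> span (?K ` {..<d})" if "j < d" for j
      proof (cases "Suc j < d")
        case True
        have "x (?K j) = ?K (Suc j)" by simp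
        moreover have "?K (Suc j) \<in> ?K ` {..<d}"
          by (rule imageI) (simp add: True)
        ultimately show ?thesis by (simp add: span_base)
      next
        case False then have "Suc j = d" using that by simp
        have "x (?K j) = ?K (Suc j)" by simp
        then show ?thesis using d(4) \<open>Suc j = d\<close> by simp
      qed
      then have "x ` (?K ` {..<d}) \<subseteq> span (?K ` {..<d})" by auto
      then show "y \<in> span (?K ` {..<d})" using lin_span_sub[OF linx _ u(1)] u(2) by simp
    qed
    have aU: "a ` span (?K ` {..<d}) \<subseteq> span (?K ` {..<d})" if a: "a \<in> F" for a
    proof
      fix y assume "y \<in> a ` span (?K ` {..<d})"
      then obtain u where u: "u \<in> span (?K ` {..<d})" "y = a u" by blast
      have "a (?K j) \<in> span (?K ` {..<d})" if "j < d" for j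
      proof -
        have "a (?K j) - scale (\<mu> a) (?K j) \<in> span (?K ` {..<j})"
          using tri[of j] a by blast
        moreover have "span (?K ` {..<j}) \<subseteq> span (?K ` {..<d})"
          using that by (intro span_mono image_mono) auto
        ultimately have h1: "a (?K j) - scale (\<mu> a) (?K j) \<in> span (?K ` {..<d})" by (rule rev_subsetD)
        have "a (?K j) - scale (\<mu> a) (?K j) + scale (\<mu> a) (?K j) \<in> span (?K ` {..<d})"
          using that by (intro span_add[OF h1] span_scale span_base) auto
        then show ?thesis by simp
      qed
      then have "a ` (?K ` {..<d}) \<subseteq> span (?K ` {..<d})" by auto
      then show "y \<in> span (?K ` {..<d})" using lin_span_sub[OF _ _ u(1)] u(2) a linF by simp
    qed
    have zero: "\<mu> (\<lambda>v. a (x v) - x (a v)) = 0" if a: "a \<in> F" for a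
    proof -
      define a' where "a' = (\<lambda>v. a (x v) - x (a v))"
      have a'F: "a' \<in> F" using ideal a x by (simp add: a'_def)
      have "\<mu> a' = 0"
      proof (rule trace_zero[OF d(2,3,1)])
        show "lin a" using a linF by auto
        show "a ` span (?K ` {..<d}) \<subseteq> span (?K ` {..<d})" by (rule aU[OF a])
        show "lin x" by (rule linx)
        show "x ` span (?K ` {..<d}) \<subseteq> span (?K ` {..<d})" by (rule xU)
        show "\<forall>i<d. a (x (?K i)) - x (a (?K i)) - scale (\<mu> a') (?K i) \<in> span (?K ` {..<i})"
        proof (intro allI impI)
          fix i assume "i < d"
          show "a (x (?K i)) - x (a (?K i)) - scale (\<mu> a') (?K i) \<in> span (?K ` {..<i})"
            using bspec[OF tri[of i] a'F] by (simp add: a'_def)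
        qed
      qed
      then show ?thesis by (simp add: a'_def)
    qed
    have "a (x w) = scale (\<mu> a) (x w)" if a: "a \<in> F" for a
    proof -
      define a' where "a' = (\<lambda>v. a (x v) - x (a v))"
      have a'F: "a' \<in> F" using ideal a x by (simp add: a'_def)
      have "a (x w) = a' w + x (a w)" by (simp add: a'_def)
      also have "a' w = 0"
      proof -
        have e1: "a' w = scale (\<mu> a') w" using w(2) a'F by blast
        have "\<mu> a' = 0" using zero[OF a] by (simp add: a'_def)
        then show ?thesis using e1 by simp
      qed
      also have "x (a w) = scale (\<mu> a) (x w)"
      proof -
        have "a w = scale (\<mu> a) w" using w(2) a by blast
        then show ?thesis by (simp add: lin_scale[OF linx])
      qed
      finally show ?thesis by simp
    qed
    then show ?thesis using xw by blast
  qed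
qed

lemma lie_step:
  assumes linL: "\<forall>a\<in>L. lin a" and FL: "F \<subseteq> L"
    and ideal: "\<forall>a\<in>F. \<forall>x\<in>L. (\<lambda>v. a (x v) - x (a v)) \<in> F"
    and W: "subspace W" "W \<noteq> {0}" "\<forall>x\<in>L. x ` W \<subseteq> W"
    and comm: "\<forall>a\<in>F. \<forall>b\<in>F. \<forall>w\<in>W. a (b w) = b (a w)"
  shows "\<exists>W'. subspace W' \<and> W' \<noteq> {0} \<and> (\<forall>x\<in>L. x ` W' \<subseteq> W') \<and>
           (\<forall>a\<in>F. \<exists>c. \<forall>w\<in>W'. a w = scale c w)"
proof -
  have linF: "\<forall>a\<in>F. lin a" using linL FL by auto
  have "\<forall>T\<in>F. lin T \<and> T ` W \<subseteq> W" using linF FL W(3) by blast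
  then obtain v where v: "v \<in> W" "v \<noteq> 0" "\<forall>T\<in>F. \<exists>c. T v = scale c v"
    using common_eigen_comm[of F W, OF _ comm W(1,2)] by blast
  define \<mu> where "\<mu> a = (SOME c. a v = scale c v)" for a
  have mu: "a v = scale (\<mu> a) v" if "a \<in> F" for a
  proof -
    have "\<exists>c. a v = scale c v" using v(3) that by blast
    then show ?thesis unfolding \<mu>_def by (rule someI_ex)
  qed
  define W' where "W' = {w \<in> W. \<forall>a\<in>F. a w = scale (\<mu> a) w}"
  have "subspace W'"
    unfolding subspace_def W'_def using W(1) linF
    by (auto simp: subspace_0 subspace_add subspace_scale lin_zero lin_add lin_scale
          scale_right_distrib scale_left_commute)
  moreover have "W' \<noteq> {0}" using v mu by (auto simp: W'_def)
  moreover have "\<forall>x\<in>L. x ` W' \<subseteq> W'"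
  proof (intro ballI subsetI)
    fix x y assume x: "x \<in> L" and "y \<in> x ` W'"
    then obtain w where w: "w \<in> W'" "y = x w" by blast
    have "x w \<in> W \<and> (\<forall>a\<in>F. a (x w) = scale (\<mu> a) (x w))"
      using w(1) by (intro weight_invariant[OF linL linF ideal W(1,3) x]) (auto simp: W'_def)
    then show "y \<in> W'" using w(2) by (simp add: W'_def)
  qed
  moreover have "\<forall>a\<in>F. \<exists>c. \<forall>w\<in>W'. a w = scale c w" by (auto simp: W'_def)
  ultimately show ?thesis by blast
qed

lemma scalar_comm:
  assumes "lin a" "lin b" "subspace W" "a ` W \<subseteq> W" "b ` W \<subseteq> W" "W \<noteq> {0}"
    and eq: "\<forall>w\<in>W. a (b w) - b (a w) = scale c w"
  shows "c = 0"
proof -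
  obtain B where B: "B \<subseteq> W" "independent B" "W \<subseteq> span B" "card B = dim W"
    using basis_exists by blast
  have fB: "finite B" using B(2) finiteI_independent by blast
  obtain h where h: "bij_betw h {0..<card B} B" using ex_bij_betw_nat_finite[OF fB] by blast
  have hB: "h ` {..<card B} = B" and hinj: "inj_on h {..<card B}"
    using h by (auto simp: bij_betw_def atLeast0LessThan)
  have spB: "span B = W" using B(1,3) assms(3) by (simp add: span_subspace)
  have "B \<noteq> {}" using B(3) assms(6) assms(3) subspace_0 by auto
  then have d0: "card B > 0" using fB by (simp add: card_gt_0_iff)
  show ?thesis
  proof (rule trace_zero[of h "card B"])
    show "independent (h ` {..<card B})" using hB B(2) by simp
    show "inj_on h {..<card B}" by (rule hinj)
    show "card B > 0" by (rule d0)
    show "lin a" "lin b" by fact+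
    show "a ` span (h ` {..<card B}) \<subseteq> span (h ` {..<card B})" using hB spB assms(4) by simp
    show "b ` span (h ` {..<card B}) \<subseteq> span (h ` {..<card B})" using hB spB assms(5) by simp
    show "\<forall>i<card B. a (b (h i)) - b (a (h i)) - scale c (h i) \<in> span (h ` {..<i})"
    proof (intro allI impI)
      fix i assume "i < card B"
      then have "h i \<in> W" using hB B(1) by auto
      then show "a (b (h i)) - b (a (h i)) - scale c (h i) \<in> span (h ` {..<i})"
        using eq by (simp add: span_zero)
    qed
  qed
qed

lemma lie_chain:
  fixes C :: "nat \<Rightarrow> ('v \<Rightarrow> 'v) set" and m :: nat
  assumes lin: "\<forall>k. \<forall>a\<in>C k. lin a" and sub: "\<forall>k. C k \<subseteq> C 0"
    and ideal: "\<forall>k. \<forall>a\<in>C k. \<forall>x\<in>C 0. (\<lambda>v. a (x v) - x (a v)) \<in> C k"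
    and der: "\<forall>k. \<forall>a\<in>C k. \<forall>b\<in>C k. (\<lambda>v. a (b v) - b (a v)) \<in> C (Suc k)"
    and top: "\<forall>a\<in>C m. \<forall>b\<in>C m. \<forall>v. a (b v) = b (a v)"
    and nz: "(UNIV::'v set) \<noteq> {0}"
  shows "\<exists>v. v \<noteq> 0 \<and> (\<forall>a\<in>C 0. \<exists>c. a v = scale c v)"
proof -
  have linL: "\<forall>a\<in>C 0. lin a" using lin by blast
  have main: "j \<le> m \<Longrightarrow> \<exists>W. subspace W \<and> W \<noteq> {0} \<and> (\<forall>x\<in>C 0. x ` W \<subseteq> W) \<and>
      (\<forall>a\<in>C (m - j). \<exists>c. \<forall>w\<in>W. a w = scale c w)" for j
  proof (induction j)
    case 0
    have "\<exists>W'. subspace W' \<and> W' \<noteq> {0} \<and> (\<forall>x\<in>C 0. x ` W' \<subseteq> W') \<and>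
           (\<forall>a\<in>C m. \<exists>c. \<forall>w\<in>W'. a w = scale c w)"
      by (rule lie_step[OF linL spec[OF sub, of m] spec[OF ideal, of m] subspace_UNIV nz]) (use top in auto)
    then show ?case by simp
  next
    case (Suc j)
    then obtain W where W: "subspace W" "W \<noteq> {0}" "\<forall>x\<in>C 0. x ` W \<subseteq> W"
      "\<forall>a\<in>C (m - j). \<exists>c. \<forall>w\<in>W. a w = scale c w" by auto
    define k where "k = m - Suc j"
    have kj: "Suc k = m - j" using Suc.prems by (simp add: k_def)
    have comm: "\<forall>a\<in>C k. \<forall>b\<in>C k. \<forall>w\<in>W. a (b w) = b (a w)"
    proof (intro ballI)
      fix a b w assume a: "a \<in> C k" and b: "b \<in> C k" and w: "w \<in> W"
      have "(\<lambda>v. a (b v) - b (a v)) \<in> C (m - j)" using der a b kj by metis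
      then obtain c where c: "\<forall>w\<in>W. a (b w) - b (a w) = scale c w" using W(4) by fastforce
      have "c = 0"
      proof (rule scalar_comm[OF _ _ W(1) _ _ W(2) c])
        show "lin a" "lin b" using lin a b by auto
        show "a ` W \<subseteq> W" "b ` W \<subseteq> W" using W(3) sub a b by auto
      qed
      then show "a (b w) = b (a w)" using c w by simp
    qed
    show ?case
      using lie_step[OF linL spec[OF sub, of k] spec[OF ideal, of k] W(1,2,3) comm]
      by (simp add: k_def)
  qed
  from main[of m] obtain W where W: "subspace W" "W \<noteq> {0}"
    "\<forall>a\<in>C 0. \<exists>c. \<forall>w\<in>W. a w = scale c w" by auto
  obtain v where "v \<in> W" "v \<noteq> 0" using subspace_nonzero[OF W(1,2)] by blast
  then show ?thesis using W(3) by blast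
qed

end



inductive_set acl :: "('v \<Rightarrow> 'v::ab_group_add) set \<Rightarrow> ('v \<Rightarrow> 'v) set" for G where
  acl_zero: "(\<lambda>v. 0) \<in> acl G"
| acl_gen: "g \<in> G \<Longrightarrow> g \<in> acl G"
| acl_add: "a \<in> acl G \<Longrightarrow> b \<in> acl G \<Longrightarrow> (\<lambda>v. a v + b v) \<in> acl G"

lemma acl_mono: "a \<in> acl G \<Longrightarrow> G \<subseteq> H \<Longrightarrow> a \<in> acl H"
  by (induction rule: acl.induct) (auto intro: acl.intros)

lemma acl_sum: "finite I \<Longrightarrow> (\<And>i. i \<in> I \<Longrightarrow> f i \<in> acl G) \<Longrightarrow> (\<lambda>v. \<Sum>i\<in>I. f i v) \<in> acl G"
proof (induction I rule: finite_induct)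
  case empty then show ?case by (simp add: acl_zero)
next
  case (insert x F)
  then have "(\<lambda>v. f x v + (\<Sum>i\<in>F. f i v)) \<in> acl G"
    by (intro acl_add[of "f x" G "\<lambda>v. \<Sum>i\<in>F. f i v", simplified]) auto
  then show ?case using insert by simp
qed

lemma acl_empty: "a \<in> acl {} \<Longrightarrow> a = (\<lambda>v. 0)"
  by (induction rule: acl.induct) auto

definition addf :: "('v::ab_group_add \<Rightarrow> 'v) \<Rightarrow> bool" where
  "addf T \<longleftrightarrow> (\<forall>x y. T (x + y) = T x + T y)"

lemma addf_zero: "addf T \<Longrightarrow> T 0 = 0"
  unfolding addf_def by (metis add_cancel_right_right add_0)

lemma acl_addf: "a \<in> acl G \<Longrightarrow> (\<forall>g\<in>G. addf g) \<Longrightarrow> addf a"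
  by (induction rule: acl.induct) (auto simp: addf_def algebra_simps)

definition comm :: "('v::ab_group_add \<Rightarrow> 'v) \<Rightarrow> ('v \<Rightarrow> 'v) \<Rightarrow> 'v \<Rightarrow> 'v" where
  "comm a b = (\<lambda>v. a (b v) - b (a v))"

lemma acl_comm:
  assumes gen: "\<forall>g\<in>G. \<forall>h\<in>H. comm g h \<in> acl K"
    and addG: "\<forall>g\<in>G. addf g" and addH: "\<forall>h\<in>H. addf h"
    and a: "a \<in> acl G" and b: "b \<in> acl H"
  shows "comm a b \<in> acl K"
  using a b
proof (induction arbitrary: b rule: acl.induct)
  case acl_zero
  have "addf b" using acl_addf[OF acl_zero.prems addH] .
  then have "comm (\<lambda>v. 0) b = (\<lambda>v. 0)" by (simp add: comm_def addf_zero)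
  then show ?case by (simp add: acl.acl_zero)
next
  case (acl_gen g)
  have ag: "addf g" using addG acl_gen.hyps by auto
  from acl_gen.prems show ?case
  proof (induction rule: acl.induct)
    case acl_zero
    then show ?case using ag by (simp add: comm_def addf_zero acl.acl_zero)
  next
    case (acl_gen h)
    then show ?case using gen acl_gen.hyps \<open>g \<in> G\<close> by auto
  next
    case (acl_add b1 b2)
    have "comm g (\<lambda>v. b1 v + b2 v) = (\<lambda>v. comm g b1 v + comm g b2 v)"
      using ag by (auto simp: comm_def addf_def)
    then show ?case using acl_add.IH by (simp add: acl.acl_add)
  qed
next
  case (acl_add a1 a2)
  have "addf b" using acl_addf[OF acl_add.prems addH] .
  then have "comm (\<lambda>v. a1 v + a2 v) b = (\<lambda>v. comm a1 b v + comm a2 b v)"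
    by (auto simp: comm_def addf_def)
  then show ?case using acl_add.IH[OF acl_add.prems] by (simp add: acl.acl_add)
qed

lemma list_two: "length xs \<ge> 2 \<Longrightarrow> xs = xs ! 0 # xs ! 1 # drop 2 xs"
  by (cases xs; cases "tl xs") auto

locale pois = vector_space scale
  for scale :: "'k::field \<Rightarrow> 'v::ab_group_add \<Rightarrow> 'v" +
  fixes n :: nat and mul :: "'v \<Rightarrow> 'v \<Rightarrow> 'v" and br :: "'v list \<Rightarrow> 'v"
  assumes n2: "n \<ge> 2"
    and ca: "comm_assoc_algebra scale mul"
    and ml: "n_multilinear scale n br"
    and sk: "skew_symmetric n br"
    and fi: "fundamental_identity n br"
    and lb: "leibniz_rule n mul br"
begin

abbreviation PP where "PP k \<equiv> derived_series scale n mul br k"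

lemma mul_add1: "mul (x + y) z = mul x z + mul y z" using ca unfolding comm_assoc_algebra_def by blast
lemma mul_scale1: "mul (scale c x) y = scale c (mul x y)" using ca unfolding comm_assoc_algebra_def by blast
lemma mul_comm: "mul x y = mul y x" using ca unfolding comm_assoc_algebra_def by blast
lemma mul_assoc: "mul (mul x y) z = mul x (mul y z)" using ca unfolding comm_assoc_algebra_def by blast
lemma mul_add2: "mul z (x + y) = mul z x + mul z y" by (metis mul_add1 mul_comm)
lemma mul_scale2: "mul y (scale c x) = scale c (mul y x)" by (metis mul_scale1 mul_comm)
lemma mul_neg1: "mul (- x) z = - mul x z"
  by (metis add.right_inverse add_cancel_right_right eq_neg_iff_add_eq_0 mul_add1)
lemma mul_neg2: "mul z (- x) = - mul z x" by (metis mul_neg1 mul_comm)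

lemma br_add: "length zs = n \<Longrightarrow> i < n \<Longrightarrow> br (zs[i := a + b]) = br (zs[i := a]) + br (zs[i := b])"
  using ml by (simp add: n_multilinear_def)
lemma br_scale: "length zs = n \<Longrightarrow> i < n \<Longrightarrow> br (zs[i := scale c a]) = scale c (br (zs[i := a]))"
  using ml by (simp add: n_multilinear_def)
lemma br_zero: "length zs = n \<Longrightarrow> i < n \<Longrightarrow> br (zs[i := 0]) = 0"
  using br_scale[of zs i 0 0] by simp
lemma br_neg: "length zs = n \<Longrightarrow> i < n \<Longrightarrow> br (zs[i := - a]) = - br (zs[i := a])"
  using br_scale[of zs i "-1" a] by simp
lemma br_swap: "length zs = n \<Longrightarrow> i < n \<Longrightarrow> j < n \<Longrightarrow> i \<noteq> j \<Longrightarrow> br (zs[i := zs ! j, j := zs ! i]) = - br zs"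
  using sk by (simp add: skew_symmetric_def)

lemma swap_mem:
  assumes "subspace X" "length zs = n" "i < n" "j < n"
  shows "br (zs[i := zs ! j, j := zs ! i]) \<in> X \<longleftrightarrow> br zs \<in> X"
proof (cases "i = j")
  case True then show ?thesis by simp
next
  case False
  then show ?thesis using br_swap[OF assms(2-4) False] assms(1)
    by (metis minus_minus subspace_neg)
qed

lemma br_slot_span:
  assumes "length zs = n" "i < n" "u \<in> span S" "subspace X" "\<forall>s\<in>S. br (zs[i := s]) \<in> X"
  shows "br (zs[i := u]) \<in> X"
  using assms(3)
proof (induction rule: span_induct_alt)
  case base then show ?case using br_zero[OF assms(1,2)] assms(4) by (simp add: subspace_0)
next
  case (step c x y)
  have "br (zs[i := scale c x + y]) = scale c (br (zs[i := x])) + br (zs[i := y])"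
    using br_add[OF assms(1,2)] br_scale[OF assms(1,2)] by simp
  then show ?case using step assms(4,5) by (simp add: subspace_add subspace_scale)
qed

lemma subspace_PP: "subspace (PP k)"
  by (cases k) auto

lemma PP_gen: "a \<in> PP k \<Longrightarrow> b \<in> PP k \<Longrightarrow> length cs = n - 2 \<Longrightarrow> br (a # b # cs) \<in> PP (Suc k)"
  by (simp only: derived_series.simps(2)) (rule span_base, blast)

lemma PP_genm: "a \<in> PP k \<Longrightarrow> b \<in> PP k \<Longrightarrow> mul a b \<in> PP (Suc k)"
  by (simp only: derived_series.simps(2)) (rule span_base, blast)

lemma PP_mono: "PP (Suc k) \<subseteq> PP k"
proof (induction k)
  case 0 then show ?case by simp
next
  case (Suc k)
  show ?case
    apply (subst derived_series.simps(2)[of _ _ _ _ "Suc k"])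
    apply (rule span_minimal[OF _ subspace_PP])
    using Suc.IH by (auto simp del: derived_series.simps intro!: PP_gen PP_genm)
qed

lemma two_ord:
  assumes len: "length zs = n" and ij: "i < j" "j < n" and mem: "zs ! i \<in> PP k" "zs ! j \<in> PP k"
  shows "br zs \<in> PP (Suc k)"
proof -
  define zs1 where "zs1 = zs[0 := zs ! i, i := zs ! 0]"
  have l1: "length zs1 = n" using len by (simp add: zs1_def)
  have z10: "zs1 ! 0 \<in> PP k" using mem ij len by (cases "i = 0") (auto simp: zs1_def nth_list_update)
  have z1j: "zs1 ! j = zs ! j" using ij len by (simp add: zs1_def nth_list_update)
  define zs2 where "zs2 = zs1[1 := zs1 ! j, j := zs1 ! 1]"
  have l2: "length zs2 = n" using l1 by (simp add: zs2_def)
  have z20: "zs2 ! 0 = zs1 ! 0" using ij n2 l1 by (simp add: zs2_def nth_list_update)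
  have z21: "zs2 ! 1 = zs1 ! j" using ij n2 l1 by (cases "j = 1") (auto simp: zs2_def nth_list_update)
  have "zs2 = zs2 ! 0 # zs2 ! 1 # drop 2 zs2" using l2 n2 by (intro list_two) simp
  moreover have "br (zs2 ! 0 # zs2 ! 1 # drop 2 zs2) \<in> PP (Suc k)"
    using z10 z20 z21 z1j mem l2 by (intro PP_gen) auto
  ultimately have "br zs2 \<in> PP (Suc k)" by simp
  moreover have "br zs2 \<in> PP (Suc k) \<longleftrightarrow> br zs1 \<in> PP (Suc k)"
    unfolding zs2_def by (rule swap_mem[OF subspace_PP l1]) (use ij n2 in auto)
  moreover have "br zs1 \<in> PP (Suc k) \<longleftrightarrow> br zs \<in> PP (Suc k)"
    unfolding zs1_def by (rule swap_mem[OF subspace_PP len]) (use ij in auto)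
  ultimately show "br zs \<in> PP (Suc k)" by blast
qed

lemma two:
  assumes "length zs = n" "i < n" "j < n" "i \<noteq> j" "zs ! i \<in> PP k" "zs ! j \<in> PP k"
  shows "br zs \<in> PP (Suc k)"
proof (cases "i < j")
  case True then show ?thesis using two_ord assms by blast
next
  case False then have "j < i" using assms(4) by simp
  then show ?thesis using two_ord assms by blast
qed

lemma take_last: assumes "length l = n" shows "l = take (n - 1) l @ [l ! (n - 1)]"
proof -
  have "n - 1 < length l" using assms n2 by simp
  then have "take (Suc (n - 1)) l = take (n - 1) l @ [l ! (n - 1)]" by (rule take_Suc_conv_app_nth)
  moreover have "Suc (n - 1) = n" using n2 by simp
  ultimately show ?thesis using assms by simp
qed

lemma ideal: "length zs = n \<Longrightarrow> i < n \<Longrightarrow> zs ! i \<in> PP k \<Longrightarrow> br zs \<in> PP k"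
proof (induction k arbitrary: zs i)
  case 0 then show ?case by simp
next
  case (Suc k)
  define G where "G = {br (a # b # cs) |a b cs. a \<in> PP k \<and> b \<in> PP k \<and> length cs = n - 2}
     \<union> {mul a b |a b. a \<in> PP k \<and> b \<in> PP k}"
  have PPG: "PP (Suc k) = span G" by (simp add: G_def)
  have zi: "zs ! i \<in> span G" using Suc.prems(3) PPG by simp
  have len: "length zs = n" and i: "i < n" using Suc.prems by auto
  have "br (zs[i := zs ! i]) \<in> PP (Suc k)"
  proof (rule br_slot_span[OF len i zi subspace_PP], rule ballI)
    fix s assume "s \<in> G"
    define z' where "z' = zs[i := s]"
    have lz': "length z' = n" using len by (simp add: z'_def)
    have z'i: "z' ! i = s" using len i by (simp add: z'_def)
    then consider (br) a b cs where "s = br (a # b # cs)" "a \<in> PP k" "b \<in> PP k" "length cs = n - 2"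
      | (mul) a b where "s = mul a b" "a \<in> PP k" "b \<in> PP k"
      using \<open>s \<in> G\<close> by (auto simp: G_def)
    then show "br z' \<in> PP (Suc k)"
    proof cases
      case br
      define zw where "zw = z'[i := z' ! (n - 1), n - 1 := z' ! i]"
      have lzw: "length zw = n" using lz' by (simp add: zw_def)
      have zwl: "zw ! (n - 1) = s" using lz' n2 z'i by (simp add: zw_def)
      define xs where "xs = take (n - 1) zw"
      have lxs: "length xs = n - 1" using lzw by (simp add: xs_def)
      have zwe: "zw = xs @ [s]" using take_last[OF lzw] zwl by (simp add: xs_def)
      define ys where "ys = a # b # cs"
      have lys: "length ys = n" using br(4) n2 by (simp add: ys_def)
      have fi': "br (xs @ [br ys]) = (\<Sum>l<n. br (ys[l := br (xs @ [ys ! l])]))"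
        using fi lxs lys by (simp add: fundamental_identity_def)
      have IHx: "br (xs @ [u]) \<in> PP k" if "u \<in> PP k" for u
        using Suc.IH[of "xs @ [u]" "n - 1"] lxs n2 that by (simp add: nth_append)
      have "br (ys[l := br (xs @ [ys ! l])]) \<in> PP (Suc k)" if "l < n" for l
      proof -
        consider "l = 0" | "l = 1" | "l \<ge> 2" by linarith
        then show ?thesis
        proof cases
          case 1 then show ?thesis using IHx[of a] br by (simp add: ys_def PP_gen del: derived_series.simps)
        next
          case 2 then show ?thesis using IHx[of b] br by (simp add: ys_def PP_gen del: derived_series.simps)
        next
          case 3
          define m where "m = l - 2"
          have lm: "l = Suc (Suc m)" using 3 by (simp add: m_def)
          show ?thesis using br by (simp add: ys_def lm PP_gen del: derived_series.simps)
        qed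
      qed
      then have "br (xs @ [br ys]) \<in> PP (Suc k)"
        unfolding fi' by (intro subspace_sum[OF subspace_PP]) auto
      then have "br zw \<in> PP (Suc k)" using zwe br(1) by (simp add: ys_def)
      moreover have "br zw \<in> PP (Suc k) \<longleftrightarrow> br z' \<in> PP (Suc k)"
        unfolding zw_def by (rule swap_mem[OF subspace_PP lz' i]) (use n2 in auto)
      ultimately show ?thesis by blast
    next
      case mul
      define zw where "zw = z'[0 := z' ! i, i := z' ! 0]"
      have lzw: "length zw = n" using lz' by (simp add: zw_def)
      have zw0: "zw ! 0 = s" using lz' n2 z'i i by (cases "i = 0") (auto simp: zw_def)
      define xs where "xs = tl zw"
      have lxs: "length xs = n - 1" using lzw by (simp add: xs_def)
      have zne: "zw \<noteq> []" using lzw n2 by auto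
      then have "zw = hd zw # tl zw" by simp
      moreover have "hd zw = zw ! 0" using zne by (simp add: hd_conv_nth)
      ultimately have zwe: "zw = s # xs" using zw0 by (simp add: xs_def)
      have lb': "br (mul a b # xs) = mul a (br (b # xs)) + mul b (br (a # xs))"
        using lb lxs by (simp add: leibniz_rule_def)
      have IHx: "br (u # xs) \<in> PP k" if "u \<in> PP k" for u
        using Suc.IH[of "u # xs" 0] lxs n2 that by simp
      have "br zw \<in> PP (Suc k)"
        unfolding zwe mul(1) lb'
        by (intro subspace_add[OF subspace_PP] PP_genm IHx mul)
      moreover have "br zw \<in> PP (Suc k) \<longleftrightarrow> br z' \<in> PP (Suc k)"
        unfolding zw_def by (rule swap_mem[OF subspace_PP lz']) (use n2 i in auto)
      ultimately show ?thesis by blast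
    qed
  qed
  then show ?case by simp
qed

definition ad :: "'v list \<Rightarrow> 'v \<Rightarrow> 'v" where "ad ys = (\<lambda>v. br (ys @ [v]))"
definition Pm :: "'v \<Rightarrow> 'v \<Rightarrow> 'v" where "Pm z = (\<lambda>v. mul z v)"

lemma br_last_upd: "length ys = n - 1 \<Longrightarrow> (ys @ [u])[n - 1 := a] = ys @ [a]"
  by (simp add: list_update_append)

lemma ad_add: assumes "length ys = n - 1" shows "ad ys (a + b) = ad ys a + ad ys b"
proof -
  have e: "(ys @ [0])[n - 1 := u] = ys @ [u]" for u using assms by (simp add: list_update_append)
  show ?thesis using br_add[of "ys @ [0]" "n - 1" a b] n2 assms unfolding e ad_def by simp
qed
lemma ad_scale: assumes "length ys = n - 1" shows "ad ys (scale c a) = scale c (ad ys a)"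
proof -
  have e: "(ys @ [0])[n - 1 := u] = ys @ [u]" for u using assms by (simp add: list_update_append)
  show ?thesis using br_scale[of "ys @ [0]" "n - 1" c a] n2 assms unfolding e ad_def by simp
qed

lemma br_swap_last:
  assumes "length (x0 # rest) = n - 1"
  shows "br ((x0 # rest) @ [u]) = - br (u # rest @ [x0])"
proof -
  have l: "length ((x0 # rest) @ [u]) = n" using assms n2 by simp
  have "((x0 # rest) @ [u])[0 := ((x0 # rest) @ [u]) ! (n - 1), n - 1 := ((x0 # rest) @ [u]) ! 0]
      = u # rest @ [x0]"
  proof -
    have nn: "n - 1 = Suc (length rest)" using assms by simp
    show ?thesis unfolding nn by (simp add: nth_append list_update_append)
  qed
  then show ?thesis using br_swap[OF l, of 0 "n - 1"] n2 by simp
qed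

lemma leib_last:
  assumes "length xs = n - 1"
  shows "br (xs @ [mul z v]) = mul z (br (xs @ [v])) + mul v (br (xs @ [z]))"
proof -
  obtain x0 rest where xs: "xs = x0 # rest" using assms n2 by (cases xs) auto
  have l0: "length (x0 # rest) = n - 1" using assms xs by simp
  have lr: "length (rest @ [x0]) = n - 1" using assms xs by simp
  have s1: "br (xs @ [u]) = - br (u # rest @ [x0])" for u
    unfolding xs by (rule br_swap_last[OF l0])
  have "br (mul z v # rest @ [x0]) = mul z (br (v # rest @ [x0])) + mul v (br (z # rest @ [x0]))"
    using lb lr by (simp add: leibniz_rule_def)
  then show ?thesis unfolding s1 by (simp add: mul_neg2)
qed

lemma comm_ad_ad:
  assumes lx: "length x = n - 1" and ly: "length y = n - 1"
  shows "comm (ad x) (ad y) = (\<lambda>v. \<Sum>i<n - 1. ad (y[i := br (x @ [y ! i])]) v)"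
proof
  fix v
  have lyv: "length (y @ [v]) = n" using ly n2 by simp
  have "br (x @ [br (y @ [v])]) = (\<Sum>i<n. br ((y @ [v])[i := br (x @ [(y @ [v]) ! i])]))"
    using fi lx lyv by (simp add: fundamental_identity_def)
  also have "\<dots> = (\<Sum>i<Suc (n - 1). br ((y @ [v])[i := br (x @ [(y @ [v]) ! i])]))"
    using n2 by simp
  also have "\<dots> = (\<Sum>i<n - 1. br ((y @ [v])[i := br (x @ [(y @ [v]) ! i])]))
      + br ((y @ [v])[n - 1 := br (x @ [(y @ [v]) ! (n - 1)])])"
    by (rule sum.lessThan_Suc)
  also have "(\<Sum>i<n - 1. br ((y @ [v])[i := br (x @ [(y @ [v]) ! i])]))
      = (\<Sum>i<n - 1. ad (y[i := br (x @ [y ! i])]) v)"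
    using ly by (intro sum.cong refl) (simp add: ad_def nth_append list_update_append)
  also have "br ((y @ [v])[n - 1 := br (x @ [(y @ [v]) ! (n - 1)])]) = ad y (ad x v)"
    using ly by (simp add: ad_def nth_append list_update_append)
  finally show "comm (ad x) (ad y) v = (\<Sum>i<n - 1. ad (y[i := br (x @ [y ! i])]) v)"
    by (simp add: comm_def ad_def)
qed

lemma comm_ad_Pm: "length x = n - 1 \<Longrightarrow> comm (ad x) (Pm z) = Pm (br (x @ [z]))"
  by (rule ext) (simp add: comm_def ad_def Pm_def leib_last mul_comm)

lemma comm_Pm_ad: "length x = n - 1 \<Longrightarrow> comm (Pm z) (ad x) = Pm (- br (x @ [z]))"
  by (rule ext) (simp add: comm_def ad_def Pm_def leib_last mul_comm mul_neg1 mul_neg2)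

lemma comm_Pm_Pm: "comm (Pm z) (Pm w) = (\<lambda>v. 0)"
  by (rule ext) (simp add: comm_def Pm_def mul_assoc[symmetric] mul_comm[of z w])

declare derived_series.simps(2)[simp del]

definition linp :: "('v \<Rightarrow> 'v) \<Rightarrow> bool" where
  "linp T \<longleftrightarrow> (\<forall>x y. T (x + y) = T x + T y) \<and> (\<forall>c x. T (scale c x) = scale c (T x))"

definition Dg :: "nat \<Rightarrow> ('v \<Rightarrow> 'v) set" where
  "Dg k = {ad ys | ys. length ys = n - 1 \<and> (\<exists>i<n - 1. ys ! i \<in> PP k)}"
definition Eg :: "nat \<Rightarrow> ('v \<Rightarrow> 'v) set" where
  "Eg k = {ad ys | ys. length ys = n - 1 \<and> (\<exists>i<n - 1. \<exists>j<n - 1. i \<noteq> j \<and> ys ! i \<in> PP k \<and> ys ! j \<in> PP k)}"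
definition Mg :: "('v \<Rightarrow> 'v) set" where "Mg = range Pm"
definition GG :: "nat \<Rightarrow> ('v \<Rightarrow> 'v) set" where
  "GG j = (if even j then Dg (j div 2) \<union> Mg else Dg (Suc (j div 2)) \<union> Eg (j div 2) \<union> Mg)"

lemma good_D: "length y = n - 1 \<Longrightarrow> i < n - 1 \<Longrightarrow> y ! i \<in> PP r \<Longrightarrow> br (y @ [t]) \<in> PP r"
  by (rule ideal[of _ i]) (auto simp: nth_append)

lemma good_E: "length y = n - 1 \<Longrightarrow> i < n - 1 \<Longrightarrow> j < n - 1 \<Longrightarrow> i \<noteq> j \<Longrightarrow>
    y ! i \<in> PP k \<Longrightarrow> y ! j \<in> PP k \<Longrightarrow> br (y @ [t]) \<in> PP (Suc k)"
  by (rule two[of _ i j]) (auto simp: nth_append)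

lemma comm_into_D:
  assumes lx: "length x = n - 1" and good: "\<forall>t. br (x @ [t]) \<in> PP r" and ly: "length y = n - 1"
  shows "comm (ad x) (ad y) \<in> acl (Dg r)"
  unfolding comm_ad_ad[OF lx ly]
proof (rule acl_sum[OF finite_lessThan], rule acl_gen)
  fix i assume "i \<in> {..<n - 1}"
  then show "ad (y[i := br (x @ [y ! i])]) \<in> Dg r"
    unfolding Dg_def using ly good by (auto intro!: exI[of _ "y[i := br (x @ [y ! i])]"] exI[of _ i])
qed

lemma comm_DD:
  assumes lx: "length x = n - 1" "p < n - 1" "x ! p \<in> PP k"
    and ly: "length y = n - 1" "q < n - 1" "y ! q \<in> PP k"
  shows "comm (ad x) (ad y) \<in> acl (Dg (Suc k) \<union> Eg k)"
  unfolding comm_ad_ad[OF lx(1) ly(1)]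
proof (rule acl_sum[OF finite_lessThan], rule acl_gen)
  fix i assume i: "i \<in> {..<n - 1}"
  define t where "t = br (x @ [y ! i])"
  show "ad (y[i := br (x @ [y ! i])]) \<in> Dg (Suc k) \<union> Eg k"
  proof (cases "i = q")
    case True
    have "t \<in> PP (Suc k)" unfolding t_def
      using two[of "x @ [y ! i]" p "n - 1" k] lx ly True by (simp add: nth_append)
    have ex: "\<exists>i'<n - 1. (y[i := t]) ! i' \<in> PP (Suc k)"
      using i ly \<open>t \<in> PP (Suc k)\<close> by (intro exI[of _ i]) simp
    have "ad (y[i := t]) \<in> Dg (Suc k)"
      unfolding Dg_def mem_Collect_eq by (intro exI[of _ "y[i := t]"]) (use ly ex in simp)
    then show ?thesis by (simp add: t_def)
  next
    case False
    have "t \<in> PP k" unfolding t_def using good_D[OF lx] .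
    have e1: "(y[i := t]) ! i = t" using ly i by simp
    have e2: "(y[i := t]) ! q = y ! q" using False by simp
    have ex: "\<exists>i'<n - 1. \<exists>j<n - 1. i' \<noteq> j \<and> (y[i := t]) ! i' \<in> PP k \<and> (y[i := t]) ! j \<in> PP k"
      using e1 e2 i ly False \<open>t \<in> PP k\<close> by (intro exI[of _ i] conjI exI[of _ q]) simp_all
    have "ad (y[i := t]) \<in> Eg k"
      unfolding Eg_def mem_Collect_eq by (intro exI[of _ "y[i := t]"]) (use ly ex in simp)
    then show ?thesis by (simp add: t_def)
  qed
qed

lemma linp_ad: "length ys = n - 1 \<Longrightarrow> linp (ad ys)"
  by (simp add: linp_def ad_add ad_scale)
lemma linp_Pm: "linp (Pm z)"
  by (simp add: linp_def Pm_def mul_add2 mul_scale2)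
lemma linp_addf: "linp T \<Longrightarrow> addf T" by (simp add: linp_def addf_def)
lemma acl_linp: "a \<in> acl G \<Longrightarrow> (\<forall>g\<in>G. linp g) \<Longrightarrow> linp a"
  by (induction rule: acl.induct) (auto simp: linp_def algebra_simps)

lemma gen_form:
  assumes "g \<in> GG j"
  shows "(\<exists>y r. length y = n - 1 \<and> g = ad y \<and> (\<forall>t. br (y @ [t]) \<in> PP r) \<and> Dg r \<subseteq> GG j) \<or> (\<exists>z. g = Pm z)"
proof (cases "even j")
  case True
  then have "g \<in> Dg (j div 2) \<or> g \<in> Mg" using assms by (simp add: GG_def)
  then show ?thesis
  proof
    assume "g \<in> Dg (j div 2)"
    then obtain y i where "length y = n - 1" "g = ad y" "i < n - 1" "y ! i \<in> PP (j div 2)"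
      by (auto simp: Dg_def)
    moreover have "Dg (j div 2) \<subseteq> GG j" using True by (auto simp: GG_def)
    ultimately show ?thesis using good_D by blast
  qed (auto simp: Mg_def)
next
  case False
  then have "g \<in> Dg (Suc (j div 2)) \<or> g \<in> Eg (j div 2) \<or> g \<in> Mg" using assms by (simp add: GG_def)
  moreover have sub: "Dg (Suc (j div 2)) \<subseteq> GG j" using False by (auto simp: GG_def)
  ultimately show ?thesis
  proof (elim disjE)
    assume "g \<in> Dg (Suc (j div 2))"
    then obtain y i where "length y = n - 1" "g = ad y" "i < n - 1" "y ! i \<in> PP (Suc (j div 2))"
      by (auto simp: Dg_def)
    then show ?thesis using good_D sub by blast
  next
    assume "g \<in> Eg (j div 2)"
    then obtain y i i' where "length y = n - 1" "g = ad y" "i < n - 1" "i' < n - 1" "i \<noteq> i'"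
      "y ! i \<in> PP (j div 2)" "y ! i' \<in> PP (j div 2)"
      by (auto simp: Eg_def)
    then show ?thesis using good_E sub by blast
  qed (auto simp: Mg_def)
qed

lemma gen_form0:
  assumes "g \<in> GG j"
  shows "(\<exists>y. length y = n - 1 \<and> g = ad y) \<or> (\<exists>z. g = Pm z)"
  using gen_form[OF assms] by blast

lemma GG0: "GG 0 = {ad y | y. length y = n - 1} \<union> Mg"
proof -
  have "Dg 0 = {ad y | y. length y = n - 1}"
    using n2 unfolding Dg_def by (auto intro!: exI[of _ 0])
  then show ?thesis by (simp add: GG_def)
qed

lemma GG_sub: "GG j \<subseteq> GG 0"
proof
  fix g assume "g \<in> GG j"
  then show "g \<in> GG 0" using gen_form0[of g j] by (auto simp: GG0 Mg_def)
qed

lemma GG_linp: "g \<in> GG j \<Longrightarrow> linp g"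
  using gen_form0[of g j] linp_ad linp_Pm by blast

lemma GG_addf: "\<forall>g\<in>GG j. addf g" using GG_linp linp_addf by blast

lemma CC_ideal: "a \<in> acl (GG k) \<Longrightarrow> x \<in> acl (GG 0) \<Longrightarrow> comm a x \<in> acl (GG k)"
proof (rule acl_comm[OF _ GG_addf GG_addf], intro ballI)
  fix g h assume g: "g \<in> GG k" and h: "h \<in> GG 0"
  from gen_form0[OF h] show "comm g h \<in> acl (GG k)"
  proof
    assume "\<exists>y'. length y' = n - 1 \<and> h = ad y'"
    then obtain y' where y': "length y' = n - 1" "h = ad y'" by blast
    from gen_form[OF g] show ?thesis
    proof
      assume "\<exists>y r. length y = n - 1 \<and> g = ad y \<and> (\<forall>t. br (y @ [t]) \<in> PP r) \<and> Dg r \<subseteq> GG k"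
      then obtain y r where "length y = n - 1" "g = ad y" "\<forall>t. br (y @ [t]) \<in> PP r" "Dg r \<subseteq> GG k"
        by blast
      then show ?thesis using comm_into_D y' acl_mono by metis
    next
      assume "\<exists>z. g = Pm z"
      then obtain z where "g = Pm z" by blast
      then show ?thesis using y' comm_Pm_ad g by (auto intro!: acl_gen simp: GG_def Mg_def)
    qed
  next
    assume "\<exists>w. h = Pm w"
    then obtain w where w: "h = Pm w" by blast
    from gen_form0[OF g] show ?thesis
    proof
      assume "\<exists>y. length y = n - 1 \<and> g = ad y"
      then obtain y where "length y = n - 1" "g = ad y" by blast
      then show ?thesis using w comm_ad_Pm by (auto intro!: acl_gen simp: GG_def Mg_def)
    next
      assume "\<exists>z. g = Pm z"
      then obtain z where "g = Pm z" by blast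
      then show ?thesis using w comm_Pm_Pm by (simp add: acl_zero)
    qed
  qed
qed

lemma Mg_GG: "Mg \<subseteq> GG j" by (auto simp: GG_def)

lemma comm_M:
  assumes "(\<exists>y. length y = n - 1 \<and> g = ad y) \<or> (\<exists>z. g = Pm z)"
    and "(\<exists>y. length y = n - 1 \<and> h = ad y) \<or> (\<exists>z. h = Pm z)"
    and "(\<exists>z. g = Pm z) \<or> (\<exists>z. h = Pm z)"
  shows "comm g h \<in> acl Mg"
  using assms comm_ad_Pm comm_Pm_ad comm_Pm_Pm
  by (auto simp: Mg_def intro: acl_gen acl_zero)

lemma gen_even:
  assumes "even k" "g \<in> GG k"
  shows "(\<exists>y p. length y = n - 1 \<and> g = ad y \<and> p < n - 1 \<and> y ! p \<in> PP (k div 2)) \<or> (\<exists>z. g = Pm z)"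
  using assms by (auto simp: GG_def Dg_def Mg_def)

lemma gen_odd:
  assumes "odd k" "g \<in> GG k"
  shows "(\<exists>y. length y = n - 1 \<and> g = ad y \<and> (\<forall>t. br (y @ [t]) \<in> PP (Suc (k div 2)))) \<or> (\<exists>z. g = Pm z)"
proof -
  have "g \<in> Dg (Suc (k div 2)) \<or> g \<in> Eg (k div 2) \<or> g \<in> Mg" using assms by (simp add: GG_def)
  then show ?thesis
  proof (elim disjE)
    assume "g \<in> Dg (Suc (k div 2))"
    then obtain y i where "length y = n - 1" "g = ad y" "i < n - 1" "y ! i \<in> PP (Suc (k div 2))"
      by (auto simp: Dg_def)
    then show ?thesis using good_D by blast
  next
    assume "g \<in> Eg (k div 2)"
    then obtain y i i' where "length y = n - 1" "g = ad y" "i < n - 1" "i' < n - 1" "i \<noteq> i'"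
      "y ! i \<in> PP (k div 2)" "y ! i' \<in> PP (k div 2)"
      by (auto simp: Eg_def)
    then show ?thesis using good_E by blast
  qed (auto simp: Mg_def)
qed

lemma CC_der: "a \<in> acl (GG k) \<Longrightarrow> b \<in> acl (GG k) \<Longrightarrow> comm a b \<in> acl (GG (Suc k))"
proof (rule acl_comm[OF _ GG_addf GG_addf], intro ballI)
  fix g h assume g: "g \<in> GG k" and h: "h \<in> GG k"
  have MS: "acl Mg \<subseteq> acl (GG (Suc k))" using Mg_GG acl_mono by blast
  show "comm g h \<in> acl (GG (Suc k))"
  proof (cases "(\<exists>z. g = Pm z) \<or> (\<exists>z. h = Pm z)")
    case True
    then show ?thesis using comm_M[OF gen_form0[OF g] gen_form0[OF h]] MS by blast
  next
    case False
    show ?thesis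
    proof (cases "even k")
      case True
      obtain y p where y: "length y = n - 1" "g = ad y" "p < n - 1" "y ! p \<in> PP (k div 2)"
        using gen_even[OF True g] False by blast
      obtain y' q where y': "length y' = n - 1" "h = ad y'" "q < n - 1" "y' ! q \<in> PP (k div 2)"
        using gen_even[OF True h] False by blast
      have "comm g h \<in> acl (Dg (Suc (k div 2)) \<union> Eg (k div 2))"
        using comm_DD[OF y(1,3,4) y'(1,3,4)] y(2) y'(2) by simp
      moreover have "Dg (Suc (k div 2)) \<union> Eg (k div 2) \<subseteq> GG (Suc k)"
        using True by (auto simp: GG_def)
      ultimately show ?thesis using acl_mono by blast
    next
      case odd: False
      obtain y where y: "length y = n - 1" "g = ad y" "\<forall>t. br (y @ [t]) \<in> PP (Suc (k div 2))"
        using gen_odd[OF odd g] False by blast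
      obtain y' where y': "length y' = n - 1" "h = ad y'"
        using gen_form0[OF h] False by blast
      have "comm g h \<in> acl (Dg (Suc (k div 2)))"
        using comm_into_D[OF y(1,3) y'(1)] y(2) y'(2) by simp
      moreover have "Dg (Suc (k div 2)) \<subseteq> GG (Suc k)"
        using odd by (auto simp: GG_def)
      ultimately show ?thesis using acl_mono by blast
    qed
  qed
qed

lemma CC_top:
  assumes s: "PP s = {0}" and a: "a \<in> acl (GG (2 * s))" and b: "b \<in> acl (GG (2 * s))"
  shows "a (b v) = b (a v)"
proof -
  have zero: "g = (\<lambda>v. 0)" if gD: "g \<in> Dg s" for g
  proof -
    obtain y i where y: "length y = n - 1" "g = ad y" "i < n - 1" "y ! i \<in> PP s"
      using gD by (auto simp: Dg_def)
    have y0: "y ! i = 0" using y(4) s by simp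
    have "br (y @ [v]) = 0" for v
    proof -
      have "(y @ [v])[i := 0] = y @ [v]" using y0 y(1,3)
        by (metis list_update_id nth_append_left)
      then show ?thesis using br_zero[of "y @ [v]" i] y(1,3) n2 by simp
    qed
    then show ?thesis using y(2) by (auto simp: ad_def)
  qed
  have G: "GG (2 * s) = Dg s \<union> Mg" by (simp add: GG_def)
  have "comm a b \<in> acl {}"
  proof (rule acl_comm[OF _ GG_addf GG_addf a b], intro ballI)
    fix g h assume g: "g \<in> GG (2 * s)" and h: "h \<in> GG (2 * s)"
    have ag: "addf g" and ah: "addf h" using g h GG_addf by blast+
    show "comm g h \<in> acl {}"
    proof (cases "g \<in> Dg s")
      case True
      then show ?thesis using zero[OF True] addf_zero[OF ah] by (simp add: comm_def acl_zero)
    next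
      case False
      show ?thesis
      proof (cases "h \<in> Dg s")
        case True
        then show ?thesis using zero[OF True] addf_zero[OF ag] by (simp add: comm_def acl_zero)
      next
        case False': False
        then have "g \<in> Mg" "h \<in> Mg" using False g h G by auto
        then show ?thesis using comm_Pm_Pm by (auto simp: Mg_def acl_zero)
      qed
    qed
  qed
  then have "comm a b = (\<lambda>v. 0)" by (rule acl_empty)
  then show ?thesis by (metis comm_def eq_iff_diff_eq_0)
qed


end

theorem theorem5p7:
  fixes scale :: "'k::{alg_closed_field, field_char_0} \<Rightarrow> 'v::ab_group_add \<Rightarrow> 'v"
    and n :: nat
    and mul :: "'v \<Rightarrow> 'v \<Rightarrow> 'v"
    and br :: "'v list \<Rightarrow> 'v"
  assumes "n \<ge> 2"
    and "poisson_n_lie_algebra scale n mul br"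
    and "finite_dim_space scale"
    and "(UNIV :: 'v set) \<noteq> {0}"
    and "solvable_poisson scale n mul br"
  shows "\<exists>v. v \<noteq> 0 \<and>
           (\<forall>x. \<exists>c. mul x v = scale c v) \<and>
           (\<forall>ys. length ys = n - 1 \<longrightarrow> (\<exists>c. br (ys @ [v]) = scale c v))"
proof -
  have vs: "vector_space scale" using assms(2) by (simp add: poisson_n_lie_algebra_def)
  interpret P: pois scale n mul br
    using assms(1,2) by (unfold_locales) (auto simp: poisson_n_lie_algebra_def vector_space_def)
  obtain B where B: "finite B" "P.span B = UNIV"
    using assms(3) by (auto simp: finite_dim_space_def)
  obtain B' where B': "B' \<subseteq> B" "P.independent B'" "B \<subseteq> P.span B'"
    using P.maximal_independent_subset[of B] by blast
  have fB': "finite B'" using B(1) B'(1) finite_subset by blast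
  have spB': "P.span B' = UNIV"
    using B(2) B'(3) P.span_mono P.span_span by (metis top.extremum_uniqueI)
  interpret L: lie_ctx scale B'
    by unfold_locales (use fB' B'(2) spB' in auto)
  obtain s where s: "P.PP s = {0}" using assms(5) by (auto simp: solvable_poisson_def)
  have linL: "L.lin a \<longleftrightarrow> P.linp a" for a by (simp add: L.lin_def P.linp_def)
  have "\<exists>v. v \<noteq> 0 \<and> (\<forall>a\<in>acl (P.GG 0). \<exists>c. a v = scale c v)"
  proof (rule L.lie_chain[of "\<lambda>j. acl (P.GG j)" "2 * s"])
    show "\<forall>k. \<forall>a\<in>acl (P.GG k). L.lin a"
      using P.acl_linp P.GG_linp linL by blast
    show "\<forall>k. acl (P.GG k) \<subseteq> acl (P.GG 0)"
      using acl_mono P.GG_sub by blast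
    show "\<forall>k. \<forall>a\<in>acl (P.GG k). \<forall>x\<in>acl (P.GG 0). (\<lambda>v. a (x v) - x (a v)) \<in> acl (P.GG k)"
      using P.CC_ideal by (simp add: comm_def)
    show "\<forall>k. \<forall>a\<in>acl (P.GG k). \<forall>b\<in>acl (P.GG k). (\<lambda>v. a (b v) - b (a v)) \<in> acl (P.GG (Suc k))"
      using P.CC_der by (simp add: comm_def)
    show "\<forall>a\<in>acl (P.GG (2 * s)). \<forall>b\<in>acl (P.GG (2 * s)). \<forall>v. a (b v) = b (a v)"
      using P.CC_top[OF s] by blast
    show "(UNIV :: 'v set) \<noteq> {0}" by (rule assms(4))
  qed
  then obtain v where v: "v \<noteq> 0" "\<forall>a\<in>acl (P.GG 0). \<exists>c. a v = scale c v" by blast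
  have "\<exists>c. mul x v = scale c v" for x
  proof -
    have "P.Pm x \<in> P.GG 0" using P.Mg_GG[of 0] by (auto simp: P.Mg_def)
    then have "P.Pm x \<in> acl (P.GG 0)" by (rule acl_gen)
    then show ?thesis using v(2) by (auto simp: P.Pm_def)
  qed
  moreover have "\<exists>c. br (ys @ [v]) = scale c v" if "length ys = n - 1" for ys
  proof -
    have "P.ad ys \<in> acl (P.GG 0)" using that by (auto simp: P.GG0 intro: acl_gen)
    then show ?thesis using v(2) by (auto simp: P.ad_def)
  qed
  ultimately show ?thesis using v(1) by blast
qed

end
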